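(* Let $a,r$ be real numbers with $0<a<a+r<1$ and let $c=b_{\mathbb{D},2}(a,a+r)$. Let $R$ be a number satisfying $b_{\mathbb{D},2}(a,a-R)=c$ and $-1<a-R<a$. Then \[ B_{\mathbb{D},2}(a;c)\subset\{z:|z-a|<R\}\cap\mathbb{D}. \]
   Context: $\mathbb{D}=\{z\in\mathbb{C}:|z|<1\}$. For $z_1,z_2\in\mathbb{D}$, $b_{\mathbb{D},2}(z_1,z_2)=\sup_{z\in\partial\mathbb{D}}\frac{|z_1-z_2|}{\sqrt{|z_1-z|^2+|z-z_2|^2}}$, and $B_{\mathbb{D},2}(a;c)=\{z\in\mathbb{D}: b_{\mathbb{D},2}(a,z)<c\}$. *)

theory Defs
  imports "HOL-Analysis.Analysis"
begin

definition unit_disk :: "complex set" where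
  "unit_disk = ball 0 1"

definition b_D2 :: "complex \<Rightarrow> complex \<Rightarrow> real" where
  "b_D2 z1 z2 = (SUP z\<in>sphere (0::complex) 1.
      cmod (z1 - z2) / sqrt ((cmod (z1 - z))\<^sup>2 + (cmod (z - z2))\<^sup>2))"

definition B_D2 :: "complex \<Rightarrow> real \<Rightarrow> complex set" where
  "B_D2 a c = {z \<in> unit_disk. b_D2 a z < c}"

end

theory Submission
  imports Defs
begin

lemma para: fixes u v w :: complex
  shows "(cmod (u - w))\<^sup>2 + (cmod (w - v))\<^sup>2 = 2 * (cmod (w - (u+v)/2))\<^sup>2 + (cmod (u - v))\<^sup>2 / 2"
  unfolding cmod_power2 by (simp add: power2_eq_square field_simps)

lemma key: fixes a R d :: real
  assumes "0 < R" "R \<le> d" "0 < a" "a < 1" "d < 1 + a"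
  shows "R * (1 - \<bar>2*a - d\<bar>/2) \<le> d * (1 - \<bar>2*a - R\<bar>/2)"
proof -
  define rd where "rd = R * d"
  define ra where "ra = R * a"
  define da where "da = d * a"
  have p1: "R - ra \<le> d - da" using mult_right_mono[of R d "1 - a"] assms
    by (simp add: ra_def da_def algebra_simps)
  have p2: "R + ra \<le> d + da" using mult_right_mono[of R d "1 + a"] assms
    by (simp add: ra_def da_def algebra_simps)
  show ?thesis
  proof (cases "d \<le> 2*a")
    case True
    then have e1: "\<bar>2*a - d\<bar> = 2*a - d" and e2: "\<bar>2*a - R\<bar> = 2*a - R" using assms by auto
    have "R * (1 - \<bar>2*a - d\<bar>/2) = R - ra + rd/2" unfolding e1 by (simp add: field_simps ra_def da_def rd_def)
    moreover have "d * (1 - \<bar>2*a - R\<bar>/2) = d - da + rd/2" unfolding e2 by (simp add: field_simps ra_def da_def rd_def)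
    ultimately show ?thesis using p1 by linarith
  next
    case False
    show ?thesis
    proof (cases "2*a \<le> R")
      case True
      then have e1: "\<bar>2*a - d\<bar> = d - 2*a" and e2: "\<bar>2*a - R\<bar> = R - 2*a" using False assms by auto
      have "R * (1 - \<bar>2*a - d\<bar>/2) = R + ra - rd/2" unfolding e1 by (simp add: field_simps ra_def da_def rd_def)
      moreover have "d * (1 - \<bar>2*a - R\<bar>/2) = d + da - rd/2" unfolding e2 by (simp add: field_simps ra_def da_def rd_def)
      ultimately show ?thesis using p2 by linarith
    next
      case F2: False
      then have e1: "\<bar>2*a - d\<bar> = d - 2*a" and e2: "\<bar>2*a - R\<bar> = 2*a - R" using False assms by auto
      have m1: "2 * ra \<le> rd" using mult_left_mono[of "2*a" d R] False assms
        by (simp add: ra_def rd_def algebra_simps)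
      have m2: "0 \<le> d - da - R + ra" using mult_nonneg_nonneg[of "d - R" "1 - a"] assms
        by (simp add: ra_def da_def algebra_simps)
      have "R * (1 - \<bar>2*a - d\<bar>/2) = R + ra - rd/2" unfolding e1 by (simp add: field_simps ra_def da_def rd_def)
      moreover have "d * (1 - \<bar>2*a - R\<bar>/2) = d - da + rd/2" unfolding e2 by (simp add: field_simps ra_def da_def rd_def)
      ultimately show ?thesis using m1 m2 by linarith
    qed
  qed
qed

lemma quot_bdd: fixes u v w :: complex
  shows "cmod (u - v) / sqrt ((cmod (u - w))\<^sup>2 + (cmod (w - v))\<^sup>2) \<le> 2"
proof -
  let ?D = "sqrt ((cmod (u - w))\<^sup>2 + (cmod (w - v))\<^sup>2)"
  have t: "cmod (u - v) \<le> cmod (u - w) + cmod (w - v)" by (metis norm_triangle_ineq diff_add_cancel add_diff_eq)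
  have "cmod (u - w) + cmod (w - v) \<le> 2 * ?D"
  proof -
    have "cmod (u - w) \<le> ?D" by (simp add: real_sqrt_le_iff' real_le_rsqrt) 
    moreover have "cmod (w - v) \<le> ?D" by (simp add: real_le_rsqrt)
    ultimately show ?thesis by linarith
  qed
  then have "cmod (u - v) \<le> 2 * ?D" using t by linarith
  then show ?thesis
  proof (cases "?D = 0")
    case True then show ?thesis by simp
  next
    case False
    moreover have "0 \<le> ?D" by simp
    ultimately have "0 < ?D" by linarith
    then show ?thesis using \<open>cmod (u - v) \<le> 2 * ?D\<close> by (simp add: pos_divide_le_eq mult.commute)
  qed
qed

lemma bdd: "bdd_above ((\<lambda>z. cmod (z1 - z2) / sqrt ((cmod (z1 - z))\<^sup>2 + (cmod (z - z2))\<^sup>2)) ` S)"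
  using quot_bdd by (intro bdd_aboveI2) blast

definition hh :: "real \<Rightarrow> real \<Rightarrow> real" where
  "hh a d = d / sqrt (2 * (1 - \<bar>2*a - d\<bar>/2)\<^sup>2 + d\<^sup>2/2)"

lemma low:
  fixes a :: real and z :: complex
  assumes "0 < a" "a < 1" "cmod z < 1"
  shows "hh a (cmod (z - of_real a)) \<le> b_D2 (of_real a) z"
proof -
  define A where "A = complex_of_real a"
  define d where "d = cmod (z - A)"
  define m where "m = (A + z) / 2"
  define w where "w = (if A + z = 0 then 1 else (A + z) / cmod (A + z))"
  have nA: "cmod A = a" using assms by (simp add: A_def)
  have d0: "0 \<le> d" by (simp add: d_def)
  have dlt: "d < 1 + a" unfolding d_def
    using norm_triangle_ineq4[of z A] nA assms by linarith
  have mlt: "cmod (A + z) < 2" using norm_triangle_ineq[of A z] nA assms by linarith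
  have ws: "w \<in> sphere 0 1" by (auto simp: w_def norm_divide)
  have wm: "cmod (w - m) = 1 - cmod m"
  proof (cases "A + z = 0")
    case True then show ?thesis by (simp add: w_def m_def)
  next
    case False
    define t where "t = cmod (A + z)"
    have t0: "0 < t" using False by (simp add: t_def)
    have "w - m = (A + z) * of_real (1 / t - 1/2)"
      using False by (simp add: w_def m_def t_def field_simps)
    then have "cmod (w - m) = t * \<bar>1 / t - 1/2\<bar>"
      by (simp only: norm_mult norm_of_real t_def)
    also have "\<dots> = \<bar>t * (1 / t - 1/2)\<bar>" using t0 by (simp add: abs_mult)
    also have "t * (1 / t - 1/2) = 1 - t/2" using t0 by (simp add: field_simps)
    also have "\<bar>1 - t/2\<bar> = 1 - cmod m" using mlt by (simp add: m_def norm_divide t_def)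
    finally show ?thesis .
  qed
  have mge: "\<bar>2*a - d\<bar>/2 \<le> cmod m"
  proof -
    have "\<bar>cmod (2*A) - cmod (A - z)\<bar> \<le> cmod (2*A - (A - z))" by (rule norm_triangle_ineq3)
    moreover have "cmod (2*A) = 2*a" using nA by (simp add: norm_mult)
    moreover have "cmod (A - z) = d" by (simp add: d_def norm_minus_commute)
    moreover have "2*A - (A - z) = A + z" by simp
    ultimately show ?thesis by (simp add: m_def norm_divide)
  qed
  have mle: "cmod m < 1" using mlt by (simp add: m_def norm_divide)
  have pos: "0 < 1 - \<bar>2*a - d\<bar>/2" using dlt d0 assms by (simp add: abs_if)
  have val: "cmod (A - z) / sqrt ((cmod (A - w))\<^sup>2 + (cmod (w - z))\<^sup>2)
      = d / sqrt (2 * (1 - cmod m)\<^sup>2 + d\<^sup>2/2)"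
  proof -
    have e: "(cmod (A - w))\<^sup>2 + (cmod (w - z))\<^sup>2 = 2 * (cmod (w - m))\<^sup>2 + d\<^sup>2/2"
      using para[of A w z] by (simp add: m_def d_def norm_minus_commute)
    have "cmod (A - z) = d" by (simp add: d_def norm_minus_commute)
    then show ?thesis using e wm by simp
  qed
  have "hh a d \<le> d / sqrt (2 * (1 - cmod m)\<^sup>2 + d\<^sup>2/2)"
  proof (cases "d = 0")
    case True then show ?thesis by (simp add: hh_def)
  next
    case False
    have s1: "(1 - cmod m)\<^sup>2 \<le> (1 - \<bar>2*a - d\<bar>/2)\<^sup>2"
      using mge mle by (intro power_mono) auto
    have "0 < sqrt (2 * (1 - cmod m)\<^sup>2 + d\<^sup>2/2)" using False d0 
      by (intro real_sqrt_gt_zero) (simp add: add_nonneg_pos)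
    moreover have "sqrt (2 * (1 - cmod m)\<^sup>2 + d\<^sup>2/2) \<le> sqrt (2 * (1 - \<bar>2*a - d\<bar>/2)\<^sup>2 + d\<^sup>2/2)"
      using s1 by simp
    ultimately show ?thesis unfolding hh_def using d0 by (intro divide_left_mono) auto
  qed
  also have "\<dots> \<le> b_D2 A z" unfolding b_D2_def val[symmetric]
    by (rule cSUP_upper[OF ws bdd])
  finally show ?thesis by (simp add: A_def d_def)
qed

lemma up:
  fixes a R :: real
  assumes "0 < a" "a < 1" "0 < R" "-1 < a - R"
  shows "b_D2 (of_real a) (of_real (a - R)) \<le> hh a R"
  unfolding b_D2_def
proof (rule cSUP_least)
  show "sphere (0::complex) 1 \<noteq> {}"
  proof -
    have "(1::complex) \<in> sphere 0 1" by simp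
    then show ?thesis by blast
  qed
next
  fix w :: complex assume w: "w \<in> sphere 0 1"
  define A where "A = complex_of_real a"
  define m where "m = (A + of_real (a - R)) / 2"
  have mr: "m = of_real ((2*a - R)/2)" by (simp add: m_def A_def field_simps)
  have nm: "cmod m = \<bar>2*a - R\<bar>/2" unfolding mr norm_of_real by simp
  have wm: "1 - cmod m \<le> cmod (w - m)" using w norm_triangle_ineq2[of w m] by simp
  have "\<bar>2*a - R\<bar> < 2" using assms by (simp add: abs_less_iff)
  then have pos: "0 \<le> 1 - cmod m" unfolding nm by simp
  have s1: "(1 - cmod m)\<^sup>2 \<le> (cmod (w - m))\<^sup>2" using wm pos by (intro power_mono) auto
  have dR: "cmod (A - of_real (a - R)) = R" using assms by (simp add: A_def)
  have "(cmod (A - w))\<^sup>2 + (cmod (w - of_real (a - R)))\<^sup>2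
        = 2 * (cmod (w - m))\<^sup>2 + R\<^sup>2/2"
    using para[of A w "of_real (a - R)"] unfolding m_def[symmetric] dR .

  then have "sqrt (2 * (1 - \<bar>2*a - R\<bar>/2)\<^sup>2 + R\<^sup>2/2) \<le> sqrt ((cmod (A - w))\<^sup>2 + (cmod (w - of_real (a - R)))\<^sup>2)"
    using s1 nm by simp
  moreover have "0 < sqrt (2 * (1 - \<bar>2*a - R\<bar>/2)\<^sup>2 + R\<^sup>2/2)" using assms
    by (intro real_sqrt_gt_zero) (simp add: add_nonneg_pos)
  ultimately have "R / sqrt ((cmod (A - w))\<^sup>2 + (cmod (w - of_real (a - R)))\<^sup>2) \<le> hh a R"
    unfolding hh_def using assms by (intro divide_left_mono) auto
  then show "cmod (of_real a - of_real (a - R)) /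
         sqrt ((cmod (of_real a - w))\<^sup>2 + (cmod (w - of_real (a - R)))\<^sup>2) \<le> hh a R"
    unfolding A_def[symmetric] dR .
qed

lemma hh_mono:
  fixes a R d :: real
  assumes "0 < R" "R \<le> d" "0 < a" "a < 1" "d < 1 + a"
  shows "hh a R \<le> hh a d"
proof -
  define p where "p = 1 - \<bar>2*a - d\<bar>/2"
  define q where "q = 1 - \<bar>2*a - R\<bar>/2"
  have p0: "0 < p" "0 < q" using assms by (auto simp: p_def q_def)
  have k: "R * p \<le> d * q" using key[OF assms] by (simp add: p_def q_def)
  have "R\<^sup>2 * (2 * p\<^sup>2 + d\<^sup>2/2) \<le> d\<^sup>2 * (2 * q\<^sup>2 + R\<^sup>2/2)"
  proof -
    have "(R*p)\<^sup>2 \<le> (d*q)\<^sup>2" using k p0 assms by (intro power_mono) auto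
    then show ?thesis by (simp add: power_mult_distrib algebra_simps)
  qed
  then have "sqrt (R\<^sup>2 * (2 * p\<^sup>2 + d\<^sup>2/2)) \<le> sqrt (d\<^sup>2 * (2 * q\<^sup>2 + R\<^sup>2/2))" by simp
  then have "R * sqrt (2 * p\<^sup>2 + d\<^sup>2/2) \<le> d * sqrt (2 * q\<^sup>2 + R\<^sup>2/2)"
    using assms by (simp add: real_sqrt_mult)
  moreover have "0 < sqrt (2 * p\<^sup>2 + d\<^sup>2/2)" "0 < sqrt (2 * q\<^sup>2 + R\<^sup>2/2)"
    using p0 by (auto intro!: real_sqrt_gt_zero add_pos_nonneg)
  ultimately show ?thesis unfolding hh_def p_def[symmetric] q_def[symmetric]
    by (simp add: divide_simps mult.commute)
qed

theorem theorem3p17: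
  fixes a r R c :: real
  assumes "0 < a" and "a < a + r" and "a + r < 1"
    and "c = b_D2 (complex_of_real a) (complex_of_real (a + r))"
    and "b_D2 (complex_of_real a) (complex_of_real (a - R)) = c"
    and "-1 < a - R" and "a - R < a"
  shows "B_D2 (complex_of_real a) c \<subseteq> {z. cmod (z - complex_of_real a) < R} \<inter> unit_disk"
proof
  fix z assume z: "z \<in> B_D2 (complex_of_real a) c"
  have a1: "a < 1" using assms by linarith
  have zd: "cmod z < 1" and zb: "b_D2 (complex_of_real a) z < c"
    using z by (auto simp: B_D2_def unit_disk_def)
  have "cmod (z - complex_of_real a) < R"
  proof (rule ccontr)
    assume "\<not> ?thesis"
    then have ge: "R \<le> cmod (z - complex_of_real a)" by simp
    have dlt: "cmod (z - complex_of_real a) < 1 + a"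
      using norm_triangle_ineq4[of z "complex_of_real a"] zd assms by simp
    have "hh a R \<le> hh a (cmod (z - complex_of_real a))"
      using hh_mono[OF _ ge assms(1) a1 dlt] assms by simp
    also have "\<dots> \<le> b_D2 (complex_of_real a) z" using low[OF assms(1) a1 zd] .
    also have "\<dots> < c" by (rule zb)
    also have "\<dots> \<le> hh a R" using up[OF assms(1) a1 _ assms(6)] assms by simp
    finally show False by simp
  qed
  then show "z \<in> {z. cmod (z - complex_of_real a) < R} \<inter> unit_disk"
    using z by (auto simp: B_D2_def)
qed

end
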